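(* Let $\Delta_{1,0}=\{A=(a_{ij})\in SL_3(\mathfrak{o}) : (a_{21}\neq 0\text{ or }a_{31}\neq0)\text{ and } a_{21}a_{32}-a_{22}a_{31}=0\}$. Then $$\Delta_{1,0}=\bigsqcup_{\substack{y_1,y_2\in Y(\mathfrak{o})\\ y_2\neq I_2}}\ \bigsqcup_{d\in D(3)}\ \bigsqcup_{u\in U(3)} \varphi_2(y_1^{-1})\,\varphi_1(y_2^{-1})\,d\,u\,\Gamma_\infty(3),$$ i.e. $\Delta_{1,0}$ is the union of these sets and they are pairwise disjoint for distinct tuples $(y_1,y_2,d,u)$.
   Context: Let $\omega=e^{2\pi i/3}$, $\mathfrak{o}=\mathbb{Z}[\omega]$, $\mathfrak{o}^\times$ its unit group. Fix representatives of nonzero elements modulo units ("$c\in(\mathfrak{o}-\{0\})/\mathfrak{o}^\times$") and, for each nonzero $c$, representatives of $\mathfrak{o}/c\mathfrak{o}$ ("$a\in\mathfrak{o}/c\mathfrak{o}$"). $Y(\mathfrak{o})=\{\begin{pmatrix}a&b\\c&d\end{pmatrix}\in SL_2(\mathfrak{o}) : c\in(\mathfrak{o}-\{0\})/\mathfrak{o}^\times,\ a\in\mathfrak{o}/c\mathfrak{o}\}\cup\{I_2\}$. $\Gamma(3)=\{A\in SL_3(\mathfrak{o}):A\equiv I_3\pmod{3\mathfrak{o}}\}$ (entrywise), $\Gamma_\infty(3)$ its subgroup of upper triangular unipotent matrices. $D(3)$: diagonal $\mathrm{diag}(i,j,k)$ with $i,j,k\in\mathfrak{o}$, $ijk=1$.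 $U(3)$: matrices $\begin{pmatrix}1&\alpha&\beta\\&1&\gamma\\&&1\end{pmatrix}$ with $\alpha,\beta,\gamma\in\{0,1,2\}+\{0,1,2\}\omega$. For $y=\begin{pmatrix}a&b\\c&d\end{pmatrix}\in SL_2(\mathfrak{o})$, $\varphi_1(y)=\begin{pmatrix}a&b&0\\c&d&0\\0&0&1\end{pmatrix}$, $\varphi_2(y)=\begin{pmatrix}1&0&0\\0&a&b\\0&c&d\end{pmatrix}$. *)

theory Defs
  imports "HOL-Analysis.Analysis"
begin

definition omega :: complex where
  "omega = exp (2 * pi * \<i> / 3)"

definition Eis :: "complex set" where
  "Eis = {of_int a + of_int b * omega | a b. True}"

definition eis_unit :: "complex \<Rightarrow> bool" where
  "eis_unit u \<longleftrightarrow> u \<in> Eis \<and> (\<exists>v\<in>Eis. u * v = 1)"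

definition eis_dvd :: "complex \<Rightarrow> complex \<Rightarrow> bool" where
  "eis_dvd c x \<longleftrightarrow> (\<exists>k\<in>Eis. x = c * k)"

definition unit_reps :: "complex set \<Rightarrow> bool" where
  "unit_reps R \<longleftrightarrow> R \<subseteq> Eis - {0} \<and>
     (\<forall>x\<in>Eis - {0}. \<exists>!r. r \<in> R \<and> (\<exists>u. eis_unit u \<and> x = u * r))"

definition residue_reps :: "complex set \<Rightarrow> (complex \<Rightarrow> complex set) \<Rightarrow> bool" where
  "residue_reps R S \<longleftrightarrow>
     (\<forall>c\<in>R. S c \<subseteq> Eis \<and> (\<forall>x\<in>Eis. \<exists>!a. a \<in> S c \<and> eis_dvd c (x - a)))"

definition SLo :: "(complex^'n^'n) set" where
  "SLo = {A. (\<forall>i j. A$i$j \<in> Eis) \<and> det A = 1}"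

definition Yo :: "complex set \<Rightarrow> (complex \<Rightarrow> complex set) \<Rightarrow> (complex^2^2) set" where
  "Yo R S = {y \<in> SLo. y$2$1 \<in> R \<and> y$1$1 \<in> S (y$2$1)} \<union> {mat 1}"

definition Gamma3 :: "(complex^3^3) set" where
  "Gamma3 = {A \<in> SLo. \<forall>i j. eis_dvd 3 (A$i$j - (if i = j then 1 else 0))}"

definition Gamma_inf3 :: "(complex^3^3) set" where
  "Gamma_inf3 = {A \<in> Gamma3. A$1$1 = 1 \<and> A$2$2 = 1 \<and> A$3$3 = 1 \<and>
                               A$2$1 = 0 \<and> A$3$1 = 0 \<and> A$3$2 = 0}"

definition D3 :: "(complex^3^3) set" where
  "D3 = {vector [vector [i, 0, 0], vector [0, j, 0], vector [0, 0, k]] | i j k.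
           i \<in> Eis \<and> j \<in> Eis \<and> k \<in> Eis \<and> i * j * k = 1}"

definition digits3 :: "complex set" where
  "digits3 = {of_int a + of_int b * omega | a b. a \<in> {0,1,2} \<and> b \<in> {0,1,2}}"

definition U3 :: "(complex^3^3) set" where
  "U3 = {vector [vector [1, al, be], vector [0, 1, ga], vector [0, 0, 1]] | al be ga.
           al \<in> digits3 \<and> be \<in> digits3 \<and> ga \<in> digits3}"

definition phi1 :: "complex^2^2 \<Rightarrow> complex^3^3" where
  "phi1 y = vector [vector [y$1$1, y$1$2, 0], vector [y$2$1, y$2$2, 0], vector [0, 0, 1]]"

definition phi2 :: "complex^2^2 \<Rightarrow> complex^3^3" where
  "phi2 y = vector [vector [1, 0, 0], vector [0, y$1$1, y$1$2], vector [0, y$2$1, y$2$2]]"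

definition Delta10 :: "(complex^3^3) set" where
  "Delta10 = {A \<in> SLo. (A$2$1 \<noteq> 0 \<or> A$3$1 \<noteq> 0) \<and> A$2$1 * A$3$2 - A$2$2 * A$3$1 = 0}"

definition lcoset :: "complex^3^3 \<Rightarrow> (complex^3^3) set \<Rightarrow> (complex^3^3) set" where
  "lcoset g H = (\<lambda>h. g ** h) ` H"

definition index_set :: "complex set \<Rightarrow> (complex \<Rightarrow> complex set) \<Rightarrow>
    ((complex^2^2) \<times> (complex^2^2) \<times> (complex^3^3) \<times> (complex^3^3)) set" where
  "index_set R S = {(y1, y2, d, u). y1 \<in> Yo R S \<and> y2 \<in> Yo R S \<and> y2 \<noteq> mat 1 \<and>
                                    d \<in> D3 \<and> u \<in> U3}"

definition piece :: "(complex^2^2) \<times> (complex^2^2) \<times> (complex^3^3) \<times> (complex^3^3) \<Rightarrow> (complex^3^3) set" where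
  "piece t = (case t of (y1, y2, d, u) \<Rightarrow>
      lcoset (phi2 (matrix_inv y1) ** phi1 (matrix_inv y2) ** d ** u) Gamma_inf3)"

end

theory Submission
  imports Defs
begin


lemma omega_eq: "omega = Complex (-1/2) (sqrt 3 / 2)"
proof -
  have "omega = exp (\<i> * complex_of_real (2*pi/3))"
    unfolding omega_def by (simp add: field_simps)
  also have "\<dots> = cis (2*pi/3)" by (simp add: cis_conv_exp)
  also have "\<dots> = Complex (-1/2) (sqrt 3 / 2)"
    by (simp add: cis.code cos_120 sin_120)
  finally show ?thesis .
qed

lemma omega_sq: "omega * omega = - 1 - omega"
  by (simp add: omega_eq complex_eq_iff field_simps)

lemma Im_omega: "Im omega = sqrt 3 / 2" by (simp add: omega_eq)
lemma Re_omega: "Re omega = -1/2" by (simp add: omega_eq)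

lemma Eis_iff: "x \<in> Eis \<longleftrightarrow> (\<exists>a b. x = of_int a + of_int b * omega)"
  by (simp add: Eis_def)

lemma Eis_add[intro,simp]: "x \<in> Eis \<Longrightarrow> y \<in> Eis \<Longrightarrow> x + y \<in> Eis"
  unfolding Eis_iff
  by (clarify, rule_tac x="a+aa" in exI, rule_tac x="b+ba" in exI, simp add: algebra_simps)

lemma Eis_uminus[intro,simp]: "x \<in> Eis \<Longrightarrow> - x \<in> Eis"
  unfolding Eis_iff
  by (clarify, rule_tac x="-a" in exI, rule_tac x="-b" in exI, simp add: algebra_simps)

lemma Eis_diff[intro,simp]: "x \<in> Eis \<Longrightarrow> y \<in> Eis \<Longrightarrow> x - y \<in> Eis"
  using Eis_add[of x "-y"] by simp

lemma Eis_mult[intro,simp]: "x \<in> Eis \<Longrightarrow> y \<in> Eis \<Longrightarrow> x * y \<in> Eis"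
proof -
  assume "x \<in> Eis" "y \<in> Eis"
  then obtain a b c d where x: "x = of_int a + of_int b * omega" and y: "y = of_int c + of_int d * omega"
    unfolding Eis_iff by blast
  have "x * y = of_int (a*c - b*d) + of_int (a*d + b*c - b*d) * omega"
  proof -
    have "x * y = of_int (a*c) + of_int (a*d + b*c) * omega + of_int (b*d) * (omega * omega)"
      unfolding x y by (simp add: algebra_simps)
    also have "\<dots> = of_int (a*c - b*d) + of_int (a*d + b*c - b*d) * omega"
      unfolding omega_sq by (simp add: algebra_simps)
    finally show ?thesis .
  qed
  then show ?thesis unfolding Eis_iff by blast
qed

lemma Eis_of_int[intro,simp]: "of_int n \<in> Eis"
  unfolding Eis_iff by (rule exI[of _ n], rule exI[of _ 0], simp)

lemma Eis_0[intro,simp]: "0 \<in> Eis" using Eis_of_int[of 0] by simp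
lemma Eis_1[intro,simp]: "1 \<in> Eis" using Eis_of_int[of 1] by simp
lemma Eis_numeral[intro,simp]: "numeral n \<in> Eis" using Eis_of_int[of "numeral n"] by simp
lemma Eis_omega[intro,simp]: "omega \<in> Eis"
  unfolding Eis_iff by (rule exI[of _ 0], rule exI[of _ 1], simp)



definition mat3 :: "complex \<Rightarrow> complex \<Rightarrow> complex \<Rightarrow> complex \<Rightarrow> complex \<Rightarrow> complex \<Rightarrow> complex \<Rightarrow> complex \<Rightarrow> complex \<Rightarrow> complex^3^3" where
  "mat3 a b c d e f g h i = vector [vector [a,b,c], vector [d,e,f], vector [g,h,i]]"

definition mat2 :: "complex \<Rightarrow> complex \<Rightarrow> complex \<Rightarrow> complex \<Rightarrow> complex^2^2" where
  "mat2 a b c d = vector [vector [a,b], vector [c,d]]"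

lemma mat3_nth[simp]:
  "mat3 a b c d e f g h i $1$1 = a" "mat3 a b c d e f g h i $1$2 = b" "mat3 a b c d e f g h i $1$3 = c"
  "mat3 a b c d e f g h i $2$1 = d" "mat3 a b c d e f g h i $2$2 = e" "mat3 a b c d e f g h i $2$3 = f"
  "mat3 a b c d e f g h i $3$1 = g" "mat3 a b c d e f g h i $3$2 = h" "mat3 a b c d e f g h i $3$3 = i"
  by (simp_all add: mat3_def)

lemma mat2_nth[simp]:
  "mat2 a b c d $1$1 = a" "mat2 a b c d $1$2 = b" "mat2 a b c d $2$1 = c" "mat2 a b c d $2$2 = d"
  by (simp_all add: mat2_def)

lemma mat3_eta: "A = mat3 (A$1$1) (A$1$2) (A$1$3) (A$2$1) (A$2$2) (A$2$3) (A$3$1) (A$3$2) (A$3$3)"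
  by (simp add: vec_eq_iff forall_3)

lemma mat2_eta: "A = mat2 (A$1$1) (A$1$2) (A$2$1) (A$2$2)"
  by (simp add: vec_eq_iff forall_2)

lemma mat3_eq_iff: "mat3 a b c d e f g h i = mat3 a' b' c' d' e' f' g' h' i' \<longleftrightarrow>
   a = a' \<and> b = b' \<and> c = c' \<and> d = d' \<and> e = e' \<and> f = f' \<and> g = g' \<and> h = h' \<and> i = i'"
  by (auto simp add: vec_eq_iff forall_3 mat3_def)

lemma mat2_eq_iff: "mat2 a b c d = mat2 a' b' c' d' \<longleftrightarrow> a = a' \<and> b = b' \<and> c = c' \<and> d = d'"
  by (auto simp add: vec_eq_iff forall_2 mat2_def)

lemma mat3_mult: "mat3 a b c d e f g h i ** mat3 a' b' c' d' e' f' g' h' i' =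
  mat3 (a*a'+b*d'+c*g') (a*b'+b*e'+c*h') (a*c'+b*f'+c*i')
       (d*a'+e*d'+f*g') (d*b'+e*e'+f*h') (d*c'+e*f'+f*i')
       (g*a'+h*d'+i*g') (g*b'+h*e'+i*h') (g*c'+h*f'+i*i')"
  by (simp add: vec_eq_iff forall_3 matrix_matrix_mult_def sum_3)

lemma mat2_mult: "mat2 a b c d ** mat2 a' b' c' d' = mat2 (a*a'+b*c') (a*b'+b*d') (c*a'+d*c') (c*b'+d*d')"
  by (simp add: vec_eq_iff forall_2 matrix_matrix_mult_def sum_2)

lemma det_mat3: "det (mat3 a b c d e f g h i) = a*e*i + b*f*g + c*d*h - a*f*h - b*d*i - c*e*g"
  by (simp add: det_3)

lemma det_mat2: "det (mat2 a b c d) = a*d - b*c"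
  by (simp add: det_2)

lemma mat1_3: "(mat 1 :: complex^3^3) = mat3 1 0 0 0 1 0 0 0 1"
  by (simp add: vec_eq_iff forall_3 mat_def)

lemma mat1_2: "(mat 1 :: complex^2^2) = mat2 1 0 0 1"
  by (simp add: vec_eq_iff forall_2 mat_def)

lemma SLo_mat3: "mat3 a b c d e f g h i \<in> SLo \<longleftrightarrow>
  a \<in> Eis \<and> b \<in> Eis \<and> c \<in> Eis \<and> d \<in> Eis \<and> e \<in> Eis \<and> f \<in> Eis \<and> g \<in> Eis \<and> h \<in> Eis \<and> i \<in> Eis
  \<and> a*e*i + b*f*g + c*d*h - a*f*h - b*d*i - c*e*g = 1"
  by (simp add: SLo_def forall_3 det_mat3 del: mat3_nth) (simp add: mat3_def)

lemma SLo_mat2: "mat2 a b c d \<in> SLo \<longleftrightarrow> a \<in> Eis \<and> b \<in> Eis \<and> c \<in> Eis \<and> d \<in> Eis \<and> a*d - b*c = 1"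
  by (simp add: SLo_def forall_2 det_mat2 del: mat2_nth) (simp add: mat2_def)

lemma phi1_mat: "phi1 (mat2 a b c d) = mat3 a b 0 c d 0 0 0 1"
  by (simp add: phi1_def mat3_def)

lemma phi2_mat: "phi2 (mat2 a b c d) = mat3 1 0 0 0 a b 0 c d"
  by (simp add: phi2_def mat3_def)

lemma matrix_inv_eqI:
  fixes A B :: "'a::comm_ring_1^'n^'n"
  assumes "A ** B = mat 1" "B ** A = mat 1"
  shows "matrix_inv A = B"
proof -
  have ex: "\<exists>B'. A ** B' = mat 1 \<and> B' ** A = mat 1" using assms by blast
  have "A ** matrix_inv A = mat 1 \<and> matrix_inv A ** A = mat 1"
    unfolding matrix_inv_def by (rule someI_ex[OF ex])
  then have "matrix_inv A = matrix_inv A ** (A ** B)" using assms by simp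
  also have "\<dots> = (matrix_inv A ** A) ** B" by (simp add: matrix_mul_assoc)
  also have "\<dots> = B" using \<open>A ** matrix_inv A = mat 1 \<and> matrix_inv A ** A = mat 1\<close> by simp
  finally show ?thesis .
qed

lemma matrix_inv_mat2:
  assumes "a*d - b*c = 1"
  shows "matrix_inv (mat2 a b c d) = mat2 d (-b) (-c) a"
  by (rule matrix_inv_eqI) (use assms in \<open>simp_all add: mat2_mult mat1_2 mat2_eq_iff algebra_simps\<close>)



lemma SLo_mult3:
  fixes A B :: "complex^3^3"
  assumes "A \<in> SLo" "B \<in> SLo" shows "A ** B \<in> SLo"
  using assms unfolding SLo_def
  by (simp add: det_mul) (simp add: matrix_matrix_mult_def sum_3)

lemma dvd_add[intro]: "eis_dvd c x \<Longrightarrow> eis_dvd c y \<Longrightarrow> eis_dvd c (x + y)"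
  unfolding eis_dvd_def by (metis Eis_add distrib_left)
lemma dvd_diff[intro]: "eis_dvd c x \<Longrightarrow> eis_dvd c y \<Longrightarrow> eis_dvd c (x - y)"
  unfolding eis_dvd_def by (metis Eis_diff right_diff_distrib)
lemma dvd_multR[intro]: "eis_dvd c x \<Longrightarrow> z \<in> Eis \<Longrightarrow> eis_dvd c (x * z)"
  unfolding eis_dvd_def by (metis Eis_mult mult.assoc)
lemma dvd_multL[intro]: "eis_dvd c x \<Longrightarrow> z \<in> Eis \<Longrightarrow> eis_dvd c (z * x)"
  using dvd_multR by (simp add: mult.commute)
lemma dvd_0[intro,simp]: "eis_dvd c 0"
  unfolding eis_dvd_def by (rule bexI[of _ 0]) auto
lemma dvd_self[intro]: "eis_dvd c (c * z) \<longleftrightarrow> True" if "z \<in> Eis"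
  unfolding eis_dvd_def using that by auto
lemma dvd_Eis: "eis_dvd 3 x \<Longrightarrow> x \<in> Eis"
  unfolding eis_dvd_def by auto

lemma digits3_Eis: "x \<in> digits3 \<Longrightarrow> x \<in> Eis"
  unfolding digits3_def Eis_def by blast

lemma digit_exists: assumes "x \<in> Eis" shows "\<exists>\<delta>\<in>digits3. eis_dvd 3 (x - \<delta>)"
proof -
  obtain a b where x: "x = of_int a + of_int b * omega" using assms Eis_iff by blast
  let ?d = "of_int (a mod 3) + of_int (b mod 3) * omega"
  have "?d \<in> digits3" unfolding digits3_def
    by (rule CollectI, rule exI[of _ "a mod 3"], rule exI[of _ "b mod 3"]) auto
  moreover have "x - ?d = 3 * (of_int (a div 3) + of_int (b div 3) * omega)"
  proof -
    have "a = 3 * (a div 3) + a mod 3" "b = 3 * (b div 3) + b mod 3" by simp_all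
    then have "of_int a = (3 * of_int (a div 3) + of_int (a mod 3) :: complex)"
       "of_int b = (3 * of_int (b div 3) + of_int (b mod 3) :: complex)"
      by (metis of_int_add of_int_mult of_int_numeral)+
    then show ?thesis unfolding x by (simp add: algebra_simps)
  qed
  moreover have "of_int (a div 3) + of_int (b div 3) * omega \<in> Eis" by auto
  ultimately show ?thesis unfolding eis_dvd_def by blast
qed

lemma digit_unique: assumes "\<delta> \<in> digits3" "\<delta>' \<in> digits3" "eis_dvd 3 (\<delta> - \<delta>')"
  shows "\<delta> = \<delta>'"
proof -
  obtain a b where d: "\<delta> = of_int a + of_int b * omega" "a \<in> {0,1,2}" "b \<in> {0,1,2}"
    using assms(1) unfolding digits3_def by blast
  obtain a' b' where d': "\<delta>' = of_int a' + of_int b' * omega" "a' \<in> {0,1,2}" "b' \<in> {0,1,2}"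
    using assms(2) unfolding digits3_def by blast
  obtain k where k: "k \<in> Eis" "\<delta> - \<delta>' = 3 * k" using assms(3) unfolding eis_dvd_def by blast
  obtain m n where kmn: "k = of_int m + of_int n * omega" using k Eis_iff by blast
  have eq: "of_int (a - a') + of_int (b - b') * omega = (of_int (3*m) + of_int (3*n) * omega :: complex)"
    using k(2) unfolding d d' kmn by (simp add: algebra_simps)
  have "Im (of_int (a - a') + of_int (b - b') * omega) = Im (of_int (3*m) + of_int (3*n) * omega :: complex)"
    using eq by simp
  then have "real_of_int (b - b') * (sqrt 3 / 2) = real_of_int (3*n) * (sqrt 3 / 2)"
    by (simp add: Im_omega)
  then have bb: "b - b' = 3 * n" by simp
  have "Re (of_int (a - a') + of_int (b - b') * omega) = Re (of_int (3*m) + of_int (3*n) * omega :: complex)"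
    using eq by simp
  then have "real_of_int (a - a') = real_of_int (3*m)" using bb
    by (simp add: Re_omega)
  then have aa: "a - a' = 3 * m" by linarith
  have "0 \<le> b" "b \<le> 2" "0 \<le> b'" "b' \<le> 2" "0 \<le> a" "a \<le> 2" "0 \<le> a'" "a' \<le> 2"
    using d d' by auto
  then have "b = b'" "a = a'" using aa bb by presburger+
  then show ?thesis using d d' by simp
qed

lemma Gamma_inf3_iff: "h \<in> Gamma_inf3 \<longleftrightarrow>
  (\<exists>p q r. h = mat3 1 p q 0 1 r 0 0 1 \<and> eis_dvd 3 p \<and> eis_dvd 3 q \<and> eis_dvd 3 r)"
proof
  assume "h \<in> Gamma_inf3"
  then show "\<exists>p q r. h = mat3 1 p q 0 1 r 0 0 1 \<and> eis_dvd 3 p \<and> eis_dvd 3 q \<and> eis_dvd 3 r"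
    unfolding Gamma_inf3_def Gamma3_def
    by (intro exI[of _ "h$1$2"] exI[of _ "h$1$3"] exI[of _ "h$2$3"])
       (auto simp: forall_3 mat3_eq_iff intro: trans[OF mat3_eta])
next
  assume "\<exists>p q r. h = mat3 1 p q 0 1 r 0 0 1 \<and> eis_dvd 3 p \<and> eis_dvd 3 q \<and> eis_dvd 3 r"
  then obtain p q r where h: "h = mat3 1 p q 0 1 r 0 0 1" "eis_dvd 3 p" "eis_dvd 3 q" "eis_dvd 3 r" by blast
  then have "p \<in> Eis" "q \<in> Eis" "r \<in> Eis" using dvd_Eis by auto
  then show "h \<in> Gamma_inf3" using h unfolding Gamma_inf3_def Gamma3_def
    by (simp add: SLo_mat3 forall_3)
qed

lemma D3_iff: "d \<in> D3 \<longleftrightarrow> (\<exists>i j k. d = mat3 i 0 0 0 j 0 0 0 k \<and> i \<in> Eis \<and> j \<in> Eis \<and> k \<in> Eis \<and> i*j*k = 1)"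
  unfolding D3_def mat3_def by blast

lemma U3_iff: "u \<in> U3 \<longleftrightarrow> (\<exists>al be ga. u = mat3 1 al be 0 1 ga 0 0 1 \<and> al \<in> digits3 \<and> be \<in> digits3 \<and> ga \<in> digits3)"
  unfolding U3_def mat3_def by blast



definition Bo :: "(complex^3^3) set" where
  "Bo = {mat3 a b c 0 e f 0 0 i | a b c e f i. a \<in> Eis \<and> b \<in> Eis \<and> c \<in> Eis \<and> e \<in> Eis \<and> f \<in> Eis \<and> i \<in> Eis
         \<and> a * e * i = 1}"

lemma Bo_mem: "a \<in> Eis \<Longrightarrow> b \<in> Eis \<Longrightarrow> c \<in> Eis \<Longrightarrow> e \<in> Eis \<Longrightarrow> f \<in> Eis \<Longrightarrow> i \<in> Eis
  \<Longrightarrow> a * e * i = 1 \<Longrightarrow> mat3 a b c 0 e f 0 0 i \<in> Bo"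
  unfolding Bo_def by blast

lemma DUH_in_Bo:
  assumes "d \<in> D3" "u \<in> U3" "h \<in> Gamma_inf3"
  shows "d ** u ** h \<in> Bo"
proof -
  obtain i j k where d: "d = mat3 i 0 0 0 j 0 0 0 k" "i \<in> Eis" "j \<in> Eis" "k \<in> Eis" "i*j*k = 1"
    using assms(1) D3_iff by blast
  obtain al be ga where u: "u = mat3 1 al be 0 1 ga 0 0 1" "al \<in> digits3" "be \<in> digits3" "ga \<in> digits3"
    using assms(2) U3_iff by blast
  obtain p q r where h: "h = mat3 1 p q 0 1 r 0 0 1" "eis_dvd 3 p" "eis_dvd 3 q" "eis_dvd 3 r"
    using assms(3) Gamma_inf3_iff by blast
  have E: "al \<in> Eis" "be \<in> Eis" "ga \<in> Eis" "p \<in> Eis" "q \<in> Eis" "r \<in> Eis"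
    using u h digits3_Eis dvd_Eis by auto
  have eq: "d ** u ** h = mat3 i (i*p + i*al) (i*q + i*al*r + i*be) 0 j (j*r + j*ga) 0 0 k"
    unfolding d u h mat3_mult by (simp add: algebra_simps)
  show ?thesis unfolding eq using E d by (intro Bo_mem) auto
qed

lemma Bo_decomp:
  assumes "x \<in> Bo"
  shows "\<exists>d\<in>D3. \<exists>u\<in>U3. \<exists>h\<in>Gamma_inf3. x = d ** u ** h"
proof -
  obtain a b c e f i where x: "x = mat3 a b c 0 e f 0 0 i" and E: "a \<in> Eis" "b \<in> Eis" "c \<in> Eis" "e \<in> Eis" "f \<in> Eis" "i \<in> Eis"
     and det: "a * e * i = 1"
    using assms unfolding Bo_def by blast
  define n12 where "n12 = b * (e * i)"
  define n13 where "n13 = c * (e * i)"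
  define n23 where "n23 = f * (a * i)"
  have N: "n12 \<in> Eis" "n13 \<in> Eis" "n23 \<in> Eis" unfolding n12_def n13_def n23_def using E by auto
  obtain al where al: "al \<in> digits3" "eis_dvd 3 (n12 - al)" using digit_exists N by blast
  obtain ga where ga: "ga \<in> digits3" "eis_dvd 3 (n23 - ga)" using digit_exists N by blast
  have "n13 - al * n23 + al * ga \<in> Eis" using N al ga digits3_Eis by auto
  then obtain be where be: "be \<in> digits3" "eis_dvd 3 (n13 - al * n23 + al * ga - be)" using digit_exists by blast
  have "eis_dvd 3 (n23 - ga)" by (rule ga(2))
  define d where "d = mat3 a 0 0 0 e 0 0 0 i"
  define u where "u = mat3 1 al be 0 1 ga 0 0 1"
  define h where "h = mat3 1 (n12 - al) (n13 - al * n23 + al * ga - be) 0 1 (n23 - ga) 0 0 1"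
  have "d \<in> D3" unfolding d_def D3_iff using E det by blast
  moreover have "u \<in> U3" unfolding u_def U3_iff using al ga be by blast
  moreover have "h \<in> Gamma_inf3" unfolding h_def Gamma_inf3_iff using al ga be by blast
  moreover have "x = d ** u ** h"
  proof -
    have 1: "a * n12 = b" unfolding n12_def using det by (metis mult.assoc mult.commute mult_1)
    have 2: "a * n13 = c" unfolding n13_def using det by (metis mult.assoc mult.commute mult_1)
    have 3: "e * n23 = f" unfolding n23_def using det by (metis mult.assoc mult.commute mult_1)
    show ?thesis unfolding x d_def u_def h_def mat3_mult mat3_eq_iff
      using 1 2 3 by (simp add: algebra_simps)
  qed
  ultimately show ?thesis by blast
qed

lemma DUH_unique:
  assumes "d \<in> D3" "u \<in> U3" "h \<in> Gamma_inf3" "d' \<in> D3" "u' \<in> U3" "h' \<in> Gamma_inf3"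
    and eq: "d ** u ** h = d' ** u' ** h'"
  shows "d = d' \<and> u = u'"
proof -
  obtain i j k where d: "d = mat3 i 0 0 0 j 0 0 0 k" "i \<in> Eis" "j \<in> Eis" "k \<in> Eis" "i*j*k = 1"
    using assms(1) D3_iff by blast
  obtain al be ga where u: "u = mat3 1 al be 0 1 ga 0 0 1" "al \<in> digits3" "be \<in> digits3" "ga \<in> digits3"
    using assms(2) U3_iff by blast
  obtain p q r where h: "h = mat3 1 p q 0 1 r 0 0 1" "eis_dvd 3 p" "eis_dvd 3 q" "eis_dvd 3 r"
    using assms(3) Gamma_inf3_iff by blast
  obtain i' j' k' where d': "d' = mat3 i' 0 0 0 j' 0 0 0 k'" "i' \<in> Eis" "j' \<in> Eis" "k' \<in> Eis" "i'*j'*k' = 1"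
    using assms(4) D3_iff by blast
  obtain al' be' ga' where u': "u' = mat3 1 al' be' 0 1 ga' 0 0 1" "al' \<in> digits3" "be' \<in> digits3" "ga' \<in> digits3"
    using assms(5) U3_iff by blast
  obtain p' q' r' where h': "h' = mat3 1 p' q' 0 1 r' 0 0 1" "eis_dvd 3 p'" "eis_dvd 3 q'" "eis_dvd 3 r'"
    using assms(6) Gamma_inf3_iff by blast
  have M1: "d ** u ** h = mat3 i (i*p + i*al) (i*q + i*al*r + i*be) 0 j (j*r + j*ga) 0 0 k"
    unfolding d u h mat3_mult by (simp add: algebra_simps)
  have M2: "d' ** u' ** h' = mat3 i' (i'*p' + i'*al') (i'*q' + i'*al'*r' + i'*be') 0 j' (j'*r' + j'*ga') 0 0 k'"
    unfolding d' u' h' mat3_mult by (simp add: algebra_simps)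
  have C: "i = i' \<and> i*p + i*al = i'*p' + i'*al' \<and> i*q + i*al*r + i*be = i'*q' + i'*al'*r' + i'*be'
     \<and> j = j' \<and> j*r + j*ga = j'*r' + j'*ga' \<and> k = k'"
    using eq unfolding M1 M2 mat3_eq_iff by blast
  then have ii: "i' = i" "j' = j" "k' = k" by auto
  have e1: "i * (p + al) = i * (p' + al')" and e2: "j * (r + ga) = j * (r' + ga')"
    and e3: "i * (q + al * r + be) = i * (q' + al' * r' + be')"
    using C unfolding ii by (simp_all add: algebra_simps)
  have "i \<noteq> 0" "j \<noteq> 0" using d(5) by auto
  then have f1: "p + al = p' + al'" and f2: "r + ga = r' + ga'" and f3: "q + al * r + be = q' + al' * r' + be'"
    using e1 e2 e3 by simp_all
  have "al - al' = p' - p" using f1 by (simp add: algebra_simps)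
  then have "eis_dvd 3 (al - al')" using h h' by auto
  then have A: "al = al'" using digit_unique u u' by blast
  have "ga - ga' = r' - r" using f2 by (simp add: algebra_simps)
  then have "eis_dvd 3 (ga - ga')" using h h' by auto
  then have G: "ga = ga'" using digit_unique u u' by blast
  have "be - be' = (q' - q) + (r' - r) * al" using f3 A by (simp add: algebra_simps)
  moreover have "eis_dvd 3 ((q' - q) + (r' - r) * al)"
    using h h' u digits3_Eis by (intro dvd_add dvd_multR dvd_diff) auto
  ultimately have "eis_dvd 3 (be - be')" by simp
  then have B: "be = be'" using digit_unique u u' by blast
  show ?thesis using d d' u u' ii A B G by simp
qed



definition ydata :: "complex set \<Rightarrow> (complex \<Rightarrow> complex set) \<Rightarrow> complex \<Rightarrow> complex \<Rightarrow> complex \<Rightarrow> complex \<Rightarrow> bool" where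
  "ydata R S a b c d \<longleftrightarrow> a \<in> Eis \<and> b \<in> Eis \<and> c \<in> Eis \<and> d \<in> Eis \<and> a*d - b*c = 1 \<and>
     ((c = 0 \<and> a = 1 \<and> b = 0 \<and> d = 1) \<or> (c \<in> R \<and> a \<in> S c))"

lemma R_nz: "unit_reps R \<Longrightarrow> c \<in> R \<Longrightarrow> c \<noteq> 0 \<and> c \<in> Eis"
  unfolding unit_reps_def by auto

lemma Yo_iff: assumes "unit_reps R"
  shows "y \<in> Yo R S \<longleftrightarrow> (\<exists>a b c d. y = mat2 a b c d \<and> ydata R S a b c d)"
proof
  assume "y \<in> Yo R S"
  then have "y \<in> SLo \<and> y$2$1 \<in> R \<and> y$1$1 \<in> S (y$2$1) \<or> y = mat 1" unfolding Yo_def by blast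
  then show "\<exists>a b c d. y = mat2 a b c d \<and> ydata R S a b c d"
  proof
    assume h: "y \<in> SLo \<and> y$2$1 \<in> R \<and> y$1$1 \<in> S (y$2$1)"
    have "mat2 (y$1$1) (y$1$2) (y$2$1) (y$2$2) \<in> SLo" using h mat2_eta[of y] by simp
    then show ?thesis unfolding SLo_mat2 ydata_def using h mat2_eta[of y] by blast
  next
    assume "y = mat 1"
    then show ?thesis unfolding mat1_2 ydata_def
      by (intro exI[of _ 1] exI[of _ 0]) auto
  qed
next
  assume "\<exists>a b c d. y = mat2 a b c d \<and> ydata R S a b c d"
  then obtain a b c d where y: "y = mat2 a b c d" and yd: "ydata R S a b c d" by blast
  show "y \<in> Yo R S" using yd unfolding ydata_def Yo_def y mat1_2 by (auto simp: SLo_mat2)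
qed

lemma ydata_mat1: "unit_reps R \<Longrightarrow> ydata R S a b c d \<Longrightarrow> mat2 a b c d = mat 1 \<longleftrightarrow> c = 0"
  unfolding ydata_def mat1_2 mat2_eq_iff using R_nz by blast

lemma R_unique: assumes "unit_reps R" "r \<in> R" "r' \<in> R" "r' = w * r" "w \<in> Eis" "w' \<in> Eis" "w * w' = 1"
  shows "r = r'"
proof -
  have r': "r' \<in> Eis - {0}" using assms(1,3) R_nz by blast
  then obtain x where "\<forall>y. (y \<in> R \<and> (\<exists>u. eis_unit u \<and> r' = u * y)) \<longleftrightarrow> y = x"
    using assms(1) unfolding unit_reps_def by metis
  moreover have "eis_unit w" "eis_unit 1" unfolding eis_unit_def using assms by auto
  ultimately show ?thesis using assms(2,3,4) by (metis mult_1)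
qed

lemma S_unique: assumes "residue_reps R S" "c \<in> R" "a \<in> S c" "a' \<in> S c" "eis_dvd c (a - a')"
  shows "a = a'"
proof -
  have "a \<in> Eis" using assms unfolding residue_reps_def by blast
  then obtain z where "\<forall>y. (y \<in> S c \<and> eis_dvd c (a - y)) \<longleftrightarrow> y = z"
    using assms(1,2) unfolding residue_reps_def by metis
  moreover have "eis_dvd c (a - a)" by simp
  ultimately show ?thesis using assms by metis
qed

lemma det_unique:
  assumes "unit_reps R" "residue_reps R S" "ydata R S a b c d" "ydata R S a' b' c d" "c \<noteq> 0"
  shows "a = a' \<and> b = b'"
proof -
  have E: "a \<in> Eis" "b \<in> Eis" "a' \<in> Eis" "b' \<in> Eis" "c \<in> R" "a \<in> S c" "a' \<in> S c"
    and D: "a*d - b*c = 1" "a'*d - b'*c = 1"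
    using assms unfolding ydata_def by auto
  have "a - a' = c * (a*(b-b') - (a-a')*b)"
  proof -
    have "(a - a') * d = (b - b') * c" using D by (simp add: algebra_simps)
    have "a - a' = (a - a') * (a*d - b*c)" using D by simp
    also have "\<dots> = a * ((a - a') * d) - (a-a')*b*c" by (simp add: algebra_simps)
    also have "\<dots> = a * ((b - b') * c) - (a-a')*b*c" using \<open>(a - a') * d = (b - b') * c\<close> by simp
    also have "\<dots> = c * (a*(b-b') - (a-a')*b)" by (simp add: algebra_simps)
    finally show ?thesis .
  qed
  then have "eis_dvd c (a - a')" unfolding eis_dvd_def using E by auto
  then have A: "a = a'" using S_unique assms(2) E by blast
  then have "b * c = b' * c" using D by (simp add: algebra_simps)
  then have "b = b'" using assms(5) by simp
  then show ?thesis using A by simp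
qed

lemma adjust:
  assumes "residue_reps R S" "c \<in> R" "a' \<in> Eis" "b' \<in> Eis" "c \<in> Eis" "d \<in> Eis" "a' * d - b' * c = 1"
  shows "\<exists>a b. ydata R S a b c d"
proof -
  obtain a where a: "a \<in> S c" "eis_dvd c (a' - a)" using assms(1,2,3) unfolding residue_reps_def by blast
  obtain k where k: "k \<in> Eis" "a' - a = c * k" using a(2) unfolding eis_dvd_def by blast
  have aE: "a \<in> Eis" using assms(1,2) a(1) unfolding residue_reps_def by blast
  have "a * d - (b' - k * d) * c = 1"
  proof -
    have a': "a' = a + c * k" using k by (simp add: algebra_simps)
    have "a*d - (b' - k*d)*c = (a + c*k)*d - b'*c" by (simp add: algebra_simps)
    then show ?thesis using assms(7) unfolding a' by simp
  qed
  then show ?thesis unfolding ydata_def using aE assms a k by (intro exI[of _ a] exI[of _ "b' - k*d"]) auto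
qed



lemma M_form:
  assumes "a1*d1 - b1*c1 = 1" "a2*d2 - b2*c2 = 1"
  shows "phi2 (matrix_inv (mat2 a1 b1 c1 d1)) ** phi1 (matrix_inv (mat2 a2 b2 c2 d2)) =
    mat3 d2 (-b2) 0 (-(d1*c2)) (d1*a2) (-b1) (c1*c2) (-(c1*a2)) a1"
  unfolding matrix_inv_mat2[OF assms(1)] matrix_inv_mat2[OF assms(2)] phi1_mat phi2_mat mat3_mult
  by (simp add: mat3_eq_iff algebra_simps)

lemma ydata_R: "ydata R S a b c d \<Longrightarrow> c \<noteq> 0 \<Longrightarrow> c \<in> R \<and> a \<in> S c"
  unfolding ydata_def by auto

lemma ydata_0: "unit_reps R \<Longrightarrow> ydata R S a b c d \<Longrightarrow> c = 0 \<Longrightarrow> a = 1 \<and> b = 0 \<and> d = 1"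
  unfolding ydata_def using R_nz by blast

lemma core_unique:
  assumes UR: "unit_reps R" and RR: "residue_reps R S"
    and y1: "ydata R S a1 b1 c1 d1" and y1': "ydata R S a1' b1' c1' d1'"
    and y2: "ydata R S a2 b2 c2 d2" and y2': "ydata R S a2' b2' c2' d2'"
    and c2: "c2 \<noteq> 0" and c2': "c2' \<noteq> 0"
    and xz: "x \<in> Eis" "z \<in> Eis" "x * z = 1" and xz': "x' \<in> Eis" "z' \<in> Eis" "x' * z' = 1"
    and E1: "x * d2 = x' * d2'" and E2: "x * (d1 * c2) = x' * (d1' * c2')"
    and E3: "x * (c1 * c2) = x' * (c1' * c2')"
  shows "a1 = a1' \<and> b1 = b1' \<and> c1 = c1' \<and> d1 = d1' \<and> a2 = a2' \<and> b2 = b2' \<and> c2 = c2' \<and> d2 = d2'"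
proof -
  define w where "w = x * z'"
  define wi where "wi = x' * z"
  have wE: "w \<in> Eis" "wi \<in> Eis" unfolding w_def wi_def using xz xz' by auto
  have wwi: "w * wi = 1" unfolding w_def wi_def using xz xz'
    by (metis mult.assoc mult.commute mult_1)
  have W1: "w * d2 = d2'" unfolding w_def using E1 xz'
    by (metis mult.assoc mult.commute mult_1)
  have W2: "w * (d1 * c2) = d1' * c2'" unfolding w_def using E2 xz'
    by (metis mult.assoc mult.commute mult_1)
  have W3: "w * (c1 * c2) = c1' * c2'" unfolding w_def using E3 xz'
    by (metis mult.assoc mult.commute mult_1)
  have WI2: "wi * (d1' * c2') = d1 * c2" using W2 wwi by (metis mult.assoc mult.commute mult_1)
  have wnz: "w \<noteq> 0" using wwi by auto
  have Y1: "a1 \<in> Eis" "b1 \<in> Eis" "c1 \<in> Eis" "d1 \<in> Eis" "a1*d1 - b1*c1 = 1"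
    and Y1': "a1' \<in> Eis" "b1' \<in> Eis" "c1' \<in> Eis" "d1' \<in> Eis" "a1'*d1' - b1'*c1' = 1"
    and Y2: "a2 \<in> Eis" "b2 \<in> Eis" "c2 \<in> Eis" "d2 \<in> Eis" "a2*d2 - b2*c2 = 1"
    and Y2': "a2' \<in> Eis" "b2' \<in> Eis" "c2' \<in> Eis" "d2' \<in> Eis" "a2'*d2' - b2'*c2' = 1"
    using y1 y1' y2 y2' unfolding ydata_def by auto
  have R2: "c2 \<in> R" "c2' \<in> R" using ydata_R y2 y2' c2 c2' by auto
  have main: "c1 = c1' \<and> d1 = d1' \<and> c2 = c2' \<and> w = 1"
  proof (cases "c1 = 0")
    case True
    then have "c1' * c2' = 0" using W3 by simp
    then have "c1' = 0" using c2' by simp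
    then have d1: "d1 = 1" "d1' = 1" using ydata_0[OF UR y1] ydata_0[OF UR y1'] True by auto
    then have "c2' = w * c2" using W2 by simp
    then have "c2 = c2'" using R_unique[OF UR R2 _ wE wwi] by blast
    then have "w = 1" using \<open>c2' = w * c2\<close> c2 by simp
    then show ?thesis using True \<open>c1' = 0\<close> d1 \<open>c2 = c2'\<close> by simp
  next
    case False
    have R1: "c1 \<in> R" using ydata_R y1 False by auto
    have "c1' * c2' \<noteq> 0" using W3 False c2 wnz by auto
    then have c1': "c1' \<noteq> 0" by auto
    have R1': "c1' \<in> R" using ydata_R y1' c1' by auto
    define k where "k = a1' * d1 - b1' * c1"
    define k' where "k' = a1 * d1' - b1 * c1'"
    have kE: "k \<in> Eis" "k' \<in> Eis" unfolding k_def k'_def using Y1 Y1' by auto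
    have C2': "c2' = (w * k) * c2"
    proof -
      have "c2' = c2' * (a1'*d1' - b1'*c1')" using Y1' by simp
      also have "\<dots> = a1' * (d1' * c2') - b1' * (c1' * c2')" by (simp add: algebra_simps)
      also have "\<dots> = a1' * (w * (d1 * c2)) - b1' * (w * (c1 * c2))" using W2 W3 by simp
      also have "\<dots> = (w * k) * c2" unfolding k_def by (simp add: algebra_simps)
      finally show ?thesis .
    qed
    have C2: "c2 = (wi * k') * c2'"
    proof -
      have "c2 = c2 * (a1*d1 - b1*c1)" using Y1 by simp
      also have "\<dots> = a1 * (d1 * c2) - b1 * (c1 * c2)" by (simp add: algebra_simps)
      also have "\<dots> = a1 * (wi * (d1' * c2')) - b1 * (wi * (c1' * c2'))"
        using WI2 W3 wwi by (metis mult.assoc mult.commute mult_1)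
      also have "\<dots> = (wi * k') * c2'" unfolding k'_def by (simp add: algebra_simps)
      finally show ?thesis .
    qed
    have "c2 = (k * k') * c2"
    proof -
      have "c2 = (wi * k') * ((w * k) * c2)" using C2 C2' by simp
      also have "\<dots> = (w * wi) * (k * k') * c2" by (simp add: algebra_simps)
      finally show ?thesis using wwi by simp
    qed
    then have kk: "k * k' = 1" using c2 by simp
    have "(w * k) * (wi * k') = (w * wi) * (k * k')" by (simp add: algebra_simps)
    then have inv: "(w * k) * (wi * k') = 1" using wwi kk by simp
    have c22: "c2 = c2'" using R_unique[OF UR R2 C2' _ _ inv] wE kE by auto
    then have wk: "w * k = 1" using C2' c2 by simp
    have "w * d1 = d1'" "w * c1 = c1'" using W2 W3 c22 c2 by (simp_all add: mult.assoc)
    then have c11: "c1 = c1'" using R_unique[OF UR R1 R1' _ wE wwi] by auto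
    then have "w = 1" using \<open>w * c1 = c1'\<close> False by simp
    then show ?thesis using c11 c22 \<open>w * d1 = d1'\<close> by simp
  qed
  have A1: "a1 = a1' \<and> b1 = b1'"
  proof (cases "c1 = 0")
    case True
    then show ?thesis using ydata_0[OF UR y1] ydata_0[OF UR y1'] main by auto
  next
    case False
    then show ?thesis using det_unique[OF UR RR y1 _ False] y1' main by auto
  qed
  have "d2 = d2'" using W1 main by simp
  then have "a2 = a2' \<and> b2 = b2'" using det_unique[OF UR RR y2 _ c2] y2' main by auto
  then show ?thesis using A1 main \<open>d2 = d2'\<close> by auto
qed



lemma unit_rep_exists:
  assumes "unit_reps R" "g \<in> Eis" "g \<noteq> 0"
  shows "\<exists>c e e'. c \<in> R \<and> e \<in> Eis \<and> e' \<in> Eis \<and> e * e' = 1 \<and> g = e * c"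
proof -
  obtain c u where "c \<in> R" "eis_unit u" "g = u * c" using assms unfolding unit_reps_def by blast
  then show ?thesis unfolding eis_unit_def by blast
qed

lemma finish:
  assumes RR: "residue_reps R S" and c2: "c2 \<in> R" "c2 \<in> Eis"
    and E: "a11 \<in> Eis" "a12 \<in> Eis" "a13 \<in> Eis" "a21 \<in> Eis" "a22 \<in> Eis" "a23 \<in> Eis" "a31 \<in> Eis" "a32 \<in> Eis" "a33 \<in> Eis"
    and det: "a11*a22*a33 + a12*a23*a31 + a13*a21*a32 - a11*a23*a32 - a12*a21*a33 - a13*a22*a31 = 1"
    and st: "a21 = c2 * s" "a31 = c2 * t" "s \<in> Eis" "t \<in> Eis"
    and mu: "\<mu> \<in> Eis" "\<nu> \<in> Eis" "\<mu> * \<nu> = 1"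
    and rel: "s = -(\<mu> * d1)" "t = \<mu> * c1"
  shows "\<exists>a2 b2 d2. ydata R S a2 b2 c2 d2 \<and> a11 = \<mu> * d2 \<and> a21 = -(\<mu> * (d1 * c2)) \<and> a31 = \<mu> * (c1 * c2)"
proof -
  define r1 where "r1 = a22*a33 - a23*a32"
  define r2 where "r2 = a13*a32 - a12*a33"
  define r3 where "r3 = a12*a23 - a13*a22"
  have rr: "r1 * a11 + r2 * a21 + r3 * a31 = 1" unfolding r1_def r2_def r3_def using det
    by (simp add: algebra_simps)
  define d2 where "d2 = \<nu> * a11"
  have "(r1 * \<mu>) * d2 - (-(r2 * s + r3 * t)) * c2 = 1"
  proof -
    have "(r1 * \<mu>) * d2 - (-(r2 * s + r3 * t)) * c2 = r1 * (\<mu> * \<nu>) * a11 + r2 * (c2 * s) + r3 * (c2 * t)"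
      unfolding d2_def by (simp add: algebra_simps)
    also have "\<dots> = 1" using rr mu st by simp
    finally show ?thesis .
  qed
  moreover have "r1 * \<mu> \<in> Eis" "-(r2 * s + r3 * t) \<in> Eis" "d2 \<in> Eis"
    unfolding r1_def r2_def r3_def d2_def using E st mu by auto
  ultimately obtain a2 b2 where y2: "ydata R S a2 b2 c2 d2"
    using adjust[OF RR c2(1)] c2 by blast
  have "a11 = \<mu> * d2" unfolding d2_def using mu by (simp add: mult.assoc[symmetric])
  moreover have "a21 = -(\<mu> * (d1 * c2))" using st rel by (simp add: algebra_simps)
  moreover have "a31 = \<mu> * (c1 * c2)" using st rel by (simp add: algebra_simps)
  ultimately show ?thesis using y2 by (intro exI[of _ a2] exI[of _ b2] exI[of _ d2]) simp
qed

lemma core_exists: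
  assumes UR: "unit_reps R" and RR: "residue_reps R S"
    and E: "a11 \<in> Eis" "a12 \<in> Eis" "a13 \<in> Eis" "a21 \<in> Eis" "a22 \<in> Eis" "a23 \<in> Eis" "a31 \<in> Eis" "a32 \<in> Eis" "a33 \<in> Eis"
    and det: "a11*a22*a33 + a12*a23*a31 + a13*a21*a32 - a11*a23*a32 - a12*a21*a33 - a13*a22*a31 = 1"
    and minor: "a21 * a32 - a22 * a31 = 0"
    and nz: "a21 \<noteq> 0 \<or> a31 \<noteq> 0"
  shows "\<exists>a1 b1 c1 d1 a2 b2 c2 d2 \<mu> \<nu>. ydata R S a1 b1 c1 d1 \<and> ydata R S a2 b2 c2 d2 \<and> c2 \<noteq> 0 \<and>
     \<mu> \<in> Eis \<and> \<nu> \<in> Eis \<and> \<mu> * \<nu> = 1 \<and>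
     a11 = \<mu> * d2 \<and> a21 = -(\<mu> * (d1 * c2)) \<and> a31 = \<mu> * (c1 * c2)"
proof -
  define p where "p = a12*a31 - a11*a32"
  define q where "q = a11*a22 - a12*a21"
  define x where "x = a23"
  define y where "y = a33"
  have H1: "p * a21 + q * a31 = 0"
  proof -
    have "p * a21 + q * a31 = - a11 * (a21 * a32 - a22 * a31)" unfolding p_def q_def by (simp add: algebra_simps)
    then show ?thesis using minor by simp
  qed
  have H2: "p * x + q * y = 1"
  proof -
    have "p * x + q * y = (a11*a22*a33 + a12*a23*a31 + a13*a21*a32 - a11*a23*a32 - a12*a21*a33 - a13*a22*a31)
       - a13 * (a21 * a32 - a22 * a31)" unfolding p_def q_def x_def y_def by (simp add: algebra_simps)
    then show ?thesis using minor det by simp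
  qed
  define g where "g = a21 * y - a31 * x"
  have G1: "a21 = q * g"
  proof -
    have "q * g = a21 * (p * x + q * y) - x * (p * a21 + q * a31)" unfolding g_def by (simp add: algebra_simps)
    then show ?thesis using H1 H2 by simp
  qed
  have G2: "a31 = -(p * g)"
  proof -
    have "-(p * g) = a31 * (p * x + q * y) - y * (p * a21 + q * a31)" unfolding g_def by (simp add: algebra_simps)
    then show ?thesis using H1 H2 by simp
  qed
  have gE: "g \<in> Eis" "p \<in> Eis" "q \<in> Eis" "x \<in> Eis" "y \<in> Eis"
    unfolding g_def p_def q_def x_def y_def using E by auto
  have "g \<noteq> 0" using nz G1 G2 by auto
  then obtain c2 e e' where ce: "c2 \<in> R" "e \<in> Eis" "e' \<in> Eis" "e * e' = 1" "g = e * c2"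
    using unit_rep_exists[OF UR gE(1)] by blast
  have c2: "c2 \<in> Eis" "c2 \<noteq> 0" using R_nz[OF UR ce(1)] by auto
  define s where "s = e * q"
  define t where "t = -(e * p)"
  have st: "a21 = c2 * s" "a31 = c2 * t" "s \<in> Eis" "t \<in> Eis"
    unfolding s_def t_def using G1 G2 ce gE by (auto simp: algebra_simps)
  have bez: "s * (e' * y) - t * (e' * x) = 1"
  proof -
    have "s * (e' * y) - t * (e' * x) = (e * e') * (p * x + q * y)" unfolding s_def t_def by (simp add: algebra_simps)
    then show ?thesis using ce H2 by simp
  qed
  show ?thesis
  proof (cases "t = 0")
    case True
    have y1: "ydata R S 1 0 0 1" unfolding ydata_def by simp
    have mn: "(-s) * (-(e' * y)) = 1" using bez True by simp
    have r1: "s = -((-s) * 1)" by simp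
    have r2: "t = (-s) * 0" using True by simp
    have mE: "-s \<in> Eis" "-(e' * y) \<in> Eis" using st gE ce by auto
    obtain a2 b2 d2 where Y2: "ydata R S a2 b2 c2 d2" "a11 = (-s) * d2" "a21 = -((-s) * (1 * c2))" "a31 = (-s) * (0 * c2)"
      using finish[OF RR ce(1) c2(1) E det st mE mn r1 r2] by blast
    show ?thesis
      apply (rule exI[of _ 1], rule exI[of _ 0], rule exI[of _ 0], rule exI[of _ 1])
      apply (rule exI[of _ a2], rule exI[of _ b2], rule exI[of _ c2], rule exI[of _ d2])
      apply (rule exI[of _ "-s"], rule exI[of _ "-(e' * y)"])
      using y1 Y2 c2 mE mn by simp
  next
    case False
    obtain c1 e2 e2' where ce2: "c1 \<in> R" "e2 \<in> Eis" "e2' \<in> Eis" "e2 * e2' = 1" "t = e2 * c1"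
      using unit_rep_exists[OF UR st(4) False] by blast
    have c1: "c1 \<in> Eis" using R_nz[OF UR ce2(1)] by auto
    define d1 where "d1 = -(s * e2')"
    have rel: "s = -(e2 * d1)" unfolding d1_def using ce2 by (simp add: algebra_simps)
    have "(-(e2 * (e' * y))) * d1 - (e2 * (e' * x)) * c1 = 1"
    proof -
      have "(-(e2 * (e' * y))) * d1 - (e2 * (e' * x)) * c1 = (e2 * e2') * (e' * s * y) - e' * x * (e2 * c1)"
        unfolding d1_def by (simp add: algebra_simps)
      also have "\<dots> = s * (e' * y) - t * (e' * x)" using ce2 by (simp add: algebra_simps)
      finally show ?thesis using bez by simp
    qed
    moreover have "-(e2 * (e' * y)) \<in> Eis" "e2 * (e' * x) \<in> Eis" "d1 \<in> Eis"
      unfolding d1_def using ce2 ce gE st by auto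
    ultimately obtain a1 b1 where y1: "ydata R S a1 b1 c1 d1"
      using adjust[OF RR ce2(1)] c1 by blast
    obtain a2 b2 d2 where Y2: "ydata R S a2 b2 c2 d2" "a11 = e2 * d2" "a21 = -(e2 * (d1 * c2))" "a31 = e2 * (c1 * c2)"
      using finish[OF RR ce(1) c2(1) E det st ce2(2) ce2(3) ce2(4) rel ce2(5)] by blast
    show ?thesis
      apply (rule exI[of _ a1], rule exI[of _ b1], rule exI[of _ c1], rule exI[of _ d1])
      apply (rule exI[of _ a2], rule exI[of _ b2], rule exI[of _ c2], rule exI[of _ d2])
      apply (rule exI[of _ e2], rule exI[of _ e2'])
      using y1 Y2 c2 ce2 by simp
  qed
qed



definition Mm :: "complex \<Rightarrow> complex \<Rightarrow> complex \<Rightarrow> complex \<Rightarrow> complex \<Rightarrow> complex \<Rightarrow> complex \<Rightarrow> complex \<Rightarrow> complex^3^3" where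
  "Mm a1 b1 c1 d1 a2 b2 c2 d2 = mat3 d2 (-b2) 0 (-(d1*c2)) (d1*a2) (-b1) (c1*c2) (-(c1*a2)) a1"

definition Nm :: "complex \<Rightarrow> complex \<Rightarrow> complex \<Rightarrow> complex \<Rightarrow> complex \<Rightarrow> complex \<Rightarrow> complex \<Rightarrow> complex \<Rightarrow> complex^3^3" where
  "Nm a1 b1 c1 d1 a2 b2 c2 d2 = mat3 a2 (b2*a1) (b2*b1) c2 (d2*a1) (d2*b1) 0 c1 d1"

lemma MN:
  assumes "a1*d1 - b1*c1 = 1" "a2*d2 - b2*c2 = 1"
  shows "Mm a1 b1 c1 d1 a2 b2 c2 d2 ** Nm a1 b1 c1 d1 a2 b2 c2 d2 = mat 1"
    "Nm a1 b1 c1 d1 a2 b2 c2 d2 ** Mm a1 b1 c1 d1 a2 b2 c2 d2 = mat 1"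
proof -
  have a1: "a1*d1 = 1 + b1*c1" and a2: "a2*d2 = 1 + b2*c2" using assms by (simp_all add: algebra_simps)
  show "Mm a1 b1 c1 d1 a2 b2 c2 d2 ** Nm a1 b1 c1 d1 a2 b2 c2 d2 = mat 1"
    unfolding Mm_def Nm_def mat3_mult mat1_3 mat3_eq_iff
    apply (intro conjI)
    by (use assms in \<open>(simp add: algebra_simps; fail) | algebra\<close>)+
  show "Nm a1 b1 c1 d1 a2 b2 c2 d2 ** Mm a1 b1 c1 d1 a2 b2 c2 d2 = mat 1"
    unfolding Mm_def Nm_def mat3_mult mat1_3 mat3_eq_iff
    apply (intro conjI)
    by (use assms in \<open>(simp add: algebra_simps; fail) | algebra\<close>)+
qed

lemma Bo_SLo: "x \<in> Bo \<Longrightarrow> x \<in> SLo"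
  unfolding Bo_def by (auto simp: SLo_mat3)

lemma Bo_form: "x \<in> Bo \<Longrightarrow> \<exists>a b c e f i. x = mat3 a b c 0 e f 0 0 i \<and> a \<in> Eis \<and> b \<in> Eis \<and> c \<in> Eis \<and> e \<in> Eis \<and> f \<in> Eis \<and> i \<in> Eis
         \<and> a * e * i = 1"
  unfolding Bo_def by blast

lemma SLo_Bo:
  fixes B :: "complex^3^3"
  assumes "B \<in> SLo" "B$2$1 = 0" "B$3$1 = 0" "B$3$2 = 0"
  shows "B \<in> Bo"
proof -
  have "mat3 (B$1$1) (B$1$2) (B$1$3) 0 (B$2$2) (B$2$3) 0 0 (B$3$3) \<in> SLo"
    using assms mat3_eta[of B] by simp
  then have "mat3 (B$1$1) (B$1$2) (B$1$3) 0 (B$2$2) (B$2$3) 0 0 (B$3$3) \<in> Bo"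
    unfolding SLo_mat3 by (intro Bo_mem) auto
  then show ?thesis using assms mat3_eta[of B] by simp
qed

lemma ydata_E: "ydata R S a b c d \<Longrightarrow> a \<in> Eis \<and> b \<in> Eis \<and> c \<in> Eis \<and> d \<in> Eis \<and> a*d - b*c = 1"
  unfolding ydata_def by auto

lemma Mm_SLo:
  assumes "a1 \<in> Eis" "b1 \<in> Eis" "c1 \<in> Eis" "d1 \<in> Eis" "a1*d1 - b1*c1 = 1"
    "a2 \<in> Eis" "b2 \<in> Eis" "c2 \<in> Eis" "d2 \<in> Eis" "a2*d2 - b2*c2 = 1"
  shows "Mm a1 b1 c1 d1 a2 b2 c2 d2 \<in> SLo" "Nm a1 b1 c1 d1 a2 b2 c2 d2 \<in> SLo"
proof -
  have "d2 * (d1 * a2) * a1 + - b2 * - b1 * (c1 * c2) + 0 * - (d1 * c2) * - (c1 * a2) - d2 * - b1 * - (c1 * a2) -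
    - b2 * - (d1 * c2) * a1 - 0 * (d1 * a2) * (c1 * c2) = (a1*d1 - b1*c1) * (a2*d2 - b2*c2)"
    by (simp add: algebra_simps)
  then show "Mm a1 b1 c1 d1 a2 b2 c2 d2 \<in> SLo" unfolding Mm_def SLo_mat3 using assms by simp
  have "a2 * (d2 * a1) * d1 + b2 * a1 * (d2 * b1) * 0 + b2 * b1 * c2 * c1 - a2 * (d2 * b1) * c1 - b2 * a1 * c2 * d1 -
    b2 * b1 * (d2 * a1) * 0 = (a1*d1 - b1*c1) * (a2*d2 - b2*c2)"
    by (simp add: algebra_simps)
  then show "Nm a1 b1 c1 d1 a2 b2 c2 d2 \<in> SLo" unfolding Nm_def SLo_mat3 using assms by simp
qed

lemma Mb_Delta:
  assumes "a1 \<in> Eis" "b1 \<in> Eis" "c1 \<in> Eis" "d1 \<in> Eis" "a1*d1 - b1*c1 = 1"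
    "a2 \<in> Eis" "b2 \<in> Eis" "c2 \<in> Eis" "d2 \<in> Eis" "a2*d2 - b2*c2 = 1"
    and c2: "c2 \<noteq> 0" and b: "b \<in> Bo"
  shows "Mm a1 b1 c1 d1 a2 b2 c2 d2 ** b \<in> Delta10"
proof -
  obtain x11 x12 x13 x22 x23 x33 where bx: "b = mat3 x11 x12 x13 0 x22 x23 0 0 x33" "x11 * x22 * x33 = 1"
    using Bo_form[OF b] by blast
  let ?A = "Mm a1 b1 c1 d1 a2 b2 c2 d2 ** b"
  have SL: "?A \<in> SLo" using SLo_mult3[OF Mm_SLo(1)[OF assms(1-10)] Bo_SLo[OF b]] .
  have e21: "?A$2$1 = -(d1*c2) * x11" and e31: "?A$3$1 = c1*c2*x11"
    and e22: "?A$2$2 = -(d1*c2) * x12 + d1*a2*x22" and e32: "?A$3$2 = c1*c2*x12 - c1*a2*x22"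
    unfolding bx Mm_def mat3_mult by simp_all
  have "x11 \<noteq> 0" using bx by auto
  moreover have "d1 \<noteq> 0 \<or> c1 \<noteq> 0" using assms(5) by auto
  ultimately have nz: "?A$2$1 \<noteq> 0 \<or> ?A$3$1 \<noteq> 0" unfolding e21 e31 using c2 by auto
  have "?A$2$1 * ?A$3$2 - ?A$2$2 * ?A$3$1 = 0" unfolding e21 e31 e22 e32 by (simp add: algebra_simps)
  then show ?thesis unfolding Delta10_def using SL nz by blast
qed

lemma piece_eq:
  assumes "a1*d1 - b1*c1 = 1" "a2*d2 - b2*c2 = 1"
  shows "piece (mat2 a1 b1 c1 d1, mat2 a2 b2 c2 d2, d, u) =
     (\<lambda>h. Mm a1 b1 c1 d1 a2 b2 c2 d2 ** (d ** u ** h)) ` Gamma_inf3"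
proof -
  have "piece (mat2 a1 b1 c1 d1, mat2 a2 b2 c2 d2, d, u) = lcoset (Mm a1 b1 c1 d1 a2 b2 c2 d2 ** d ** u) Gamma_inf3"
    by (simp add: piece_def M_form[OF assms] Mm_def)
  then show ?thesis unfolding lcoset_def by (simp add: matrix_mul_assoc)
qed



lemma yo_data:
  assumes "unit_reps R" "y \<in> Yo R S"
  obtains a b c d where "y = mat2 a b c d" "ydata R S a b c d"
  using assms Yo_iff by blast

lemma sub1:
  assumes UR: "unit_reps R" and t: "t \<in> index_set R S" and A: "A \<in> piece t"
  shows "A \<in> Delta10"
proof -
  obtain y1 y2 d u where tt: "t = (y1, y2, d, u)" and m: "y1 \<in> Yo R S" "y2 \<in> Yo R S" "y2 \<noteq> mat 1" "d \<in> D3" "u \<in> U3"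
    using t unfolding index_set_def by blast
  obtain a1 b1 c1 d1 where y1: "y1 = mat2 a1 b1 c1 d1" "ydata R S a1 b1 c1 d1" using yo_data[OF UR m(1)] by blast
  obtain a2 b2 c2 d2 where y2: "y2 = mat2 a2 b2 c2 d2" "ydata R S a2 b2 c2 d2" using yo_data[OF UR m(2)] by blast
  have c2: "c2 \<noteq> 0" using ydata_mat1[OF UR y2(2)] m(3) y2(1) by blast
  note E1 = ydata_E[OF y1(2)] and E2 = ydata_E[OF y2(2)]
  obtain h where h: "h \<in> Gamma_inf3" "A = Mm a1 b1 c1 d1 a2 b2 c2 d2 ** (d ** u ** h)"
    using A unfolding tt y1(1) y2(1) piece_eq[OF conjunct2[OF conjunct2[OF conjunct2[OF conjunct2[OF E1]]]]
       conjunct2[OF conjunct2[OF conjunct2[OF conjunct2[OF E2]]]]] by blast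
  have "d ** u ** h \<in> Bo" using DUH_in_Bo m h by blast
  then show ?thesis unfolding h(2) using Mb_Delta E1 E2 c2 by blast
qed

lemma sub2:
  assumes UR: "unit_reps R" and RR: "residue_reps R S" and A: "A \<in> Delta10"
  shows "\<exists>t\<in>index_set R S. A \<in> piece t"
proof -
  define a11 where "a11 = A$1$1"
  define a12 where "a12 = A$1$2"
  define a13 where "a13 = A$1$3"
  define a21 where "a21 = A$2$1"
  define a22 where "a22 = A$2$2"
  define a23 where "a23 = A$2$3"
  define a31 where "a31 = A$3$1"
  define a32 where "a32 = A$3$2"
  define a33 where "a33 = A$3$3"
  have Aeq: "A = mat3 a11 a12 a13 a21 a22 a23 a31 a32 a33"
    unfolding a11_def a12_def a13_def a21_def a22_def a23_def a31_def a32_def a33_def by (rule mat3_eta)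
  have ASL: "A \<in> SLo" and minor: "a21 * a32 - a22 * a31 = 0" and nz: "a21 \<noteq> 0 \<or> a31 \<noteq> 0"
    using A unfolding Delta10_def a21_def a32_def a22_def a31_def by auto
  then have E: "a11 \<in> Eis" "a12 \<in> Eis" "a13 \<in> Eis" "a21 \<in> Eis" "a22 \<in> Eis" "a23 \<in> Eis" "a31 \<in> Eis" "a32 \<in> Eis" "a33 \<in> Eis"
    and det: "a11*a22*a33 + a12*a23*a31 + a13*a21*a32 - a11*a23*a32 - a12*a21*a33 - a13*a22*a31 = 1"
    unfolding Aeq SLo_mat3 by auto
  obtain a1 b1 c1 d1 a2 b2 c2 d2 \<mu> \<nu> where y1: "ydata R S a1 b1 c1 d1" and y2: "ydata R S a2 b2 c2 d2"
    and c2: "c2 \<noteq> 0" and mu: "\<mu> \<in> Eis" "\<nu> \<in> Eis" "\<mu> * \<nu> = 1"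
    and col: "a11 = \<mu> * d2" "a21 = -(\<mu> * (d1 * c2))" "a31 = \<mu> * (c1 * c2)"
    using core_exists[OF UR RR E det minor nz] by blast
  note E1 = ydata_E[OF y1] and E2 = ydata_E[OF y2]
  have det1: "a1*d1 - b1*c1 = 1" and det2: "a2*d2 - b2*c2 = 1" using E1 E2 by auto
  define M where "M = Mm a1 b1 c1 d1 a2 b2 c2 d2"
  define N where "N = Nm a1 b1 c1 d1 a2 b2 c2 d2"
  define b where "b = N ** A"
  have bSL: "b \<in> SLo" unfolding b_def N_def using SLo_mult3[OF Mm_SLo(2) ASL] E1 E2 by blast
  have b21: "b$2$1 = c2*a11 + d2*a1*a21 + d2*b1*a31" and b31: "b$3$1 = c1*a21 + d1*a31"
    and b32: "b$3$2 = c1*a22 + d1*a32"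
    unfolding b_def N_def Nm_def Aeq mat3_mult by (simp_all add: algebra_simps)
  have "b$2$1 = \<mu> * c2 * d2 * (1 - (a1*d1 - b1*c1))" unfolding b21 col by (simp add: algebra_simps)
  then have z1: "b$2$1 = 0" using det1 by simp
  have z2: "b$3$1 = 0" unfolding b31 col by (simp add: algebra_simps)
  have "-(\<mu> * c2) * (c1*a22 + d1*a32) = a21 * a32 - a22 * a31" unfolding col by (simp add: algebra_simps)
  then have "(\<mu> * c2) * (c1*a22 + d1*a32) = 0" using minor by simp
  moreover have "\<mu> \<noteq> 0" using mu by auto
  ultimately have z3: "b$3$2 = 0" unfolding b32 using c2 by simp
  have "b \<in> Bo" using SLo_Bo[OF bSL z1 z2 z3] .
  then obtain d u h where duh: "d \<in> D3" "u \<in> U3" "h \<in> Gamma_inf3" "b = d ** u ** h" using Bo_decomp by blast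
  have "A = M ** b" unfolding b_def M_def N_def matrix_mul_assoc MN(1)[OF det1 det2] by simp
  then have "A \<in> piece (mat2 a1 b1 c1 d1, mat2 a2 b2 c2 d2, d, u)"
    unfolding piece_eq[OF det1 det2] M_def using duh by blast
  moreover have "(mat2 a1 b1 c1 d1, mat2 a2 b2 c2 d2, d, u) \<in> index_set R S"
    unfolding index_set_def using Yo_iff[OF UR] y1 y2 duh ydata_mat1[OF UR y2] c2 by blast
  ultimately show ?thesis by blast
qed

lemma disj:
  assumes UR: "unit_reps R" and RR: "residue_reps R S" and t: "t \<in> index_set R S" and t': "t' \<in> index_set R S"
    and A: "A \<in> piece t" "A \<in> piece t'"
  shows "t = t'"
proof -
  obtain y1 y2 d u where tt: "t = (y1, y2, d, u)" and m: "y1 \<in> Yo R S" "y2 \<in> Yo R S" "y2 \<noteq> mat 1" "d \<in> D3" "u \<in> U3"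
    using t unfolding index_set_def by blast
  obtain a1 b1 c1 d1 where y1: "y1 = mat2 a1 b1 c1 d1" "ydata R S a1 b1 c1 d1" using yo_data[OF UR m(1)] by blast
  obtain a2 b2 c2 d2 where y2: "y2 = mat2 a2 b2 c2 d2" "ydata R S a2 b2 c2 d2" using yo_data[OF UR m(2)] by blast
  have c2: "c2 \<noteq> 0" using ydata_mat1[OF UR y2(2)] m(3) y2(1) by blast
  note E1 = ydata_E[OF y1(2)] and E2 = ydata_E[OF y2(2)]
  have det1: "a1*d1 - b1*c1 = 1" and det2: "a2*d2 - b2*c2 = 1" using E1 E2 by auto
  obtain h where h: "h \<in> Gamma_inf3" "A = Mm a1 b1 c1 d1 a2 b2 c2 d2 ** (d ** u ** h)"
    using A(1) unfolding tt y1(1) y2(1) piece_eq[OF det1 det2] by blast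
  obtain y1' y2' d' u' where tt': "t' = (y1', y2', d', u')" and m': "y1' \<in> Yo R S" "y2' \<in> Yo R S" "y2' \<noteq> mat 1" "d' \<in> D3" "u' \<in> U3"
    using t' unfolding index_set_def by blast
  obtain a1' b1' c1' d1' where y1': "y1' = mat2 a1' b1' c1' d1'" "ydata R S a1' b1' c1' d1'" using yo_data[OF UR m'(1)] by blast
  obtain a2' b2' c2' d2' where y2': "y2' = mat2 a2' b2' c2' d2'" "ydata R S a2' b2' c2' d2'" using yo_data[OF UR m'(2)] by blast
  have c2': "c2' \<noteq> 0" using ydata_mat1[OF UR y2'(2)] m'(3) y2'(1) by blast
  note E1' = ydata_E[OF y1'(2)] and E2' = ydata_E[OF y2'(2)]
  have det1': "a1'*d1' - b1'*c1' = 1" and det2': "a2'*d2' - b2'*c2' = 1" using E1' E2' by auto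
  obtain h' where h': "h' \<in> Gamma_inf3" "A = Mm a1' b1' c1' d1' a2' b2' c2' d2' ** (d' ** u' ** h')"
    using A(2) unfolding tt' y1'(1) y2'(1) piece_eq[OF det1' det2'] by blast
  have bB: "d ** u ** h \<in> Bo" using DUH_in_Bo m h by blast
  have bB': "d' ** u' ** h' \<in> Bo" using DUH_in_Bo m' h' by blast
  obtain x11 x12 x13 x22 x23 x33 where bx: "d ** u ** h = mat3 x11 x12 x13 0 x22 x23 0 0 x33"
     "x11 \<in> Eis" "x22 \<in> Eis" "x33 \<in> Eis" "x11 * x22 * x33 = 1"
    using Bo_form[OF bB] by blast
  obtain x11' x12' x13' x22' x23' x33' where bx': "d' ** u' ** h' = mat3 x11' x12' x13' 0 x22' x23' 0 0 x33'"
     "x11' \<in> Eis" "x22' \<in> Eis" "x33' \<in> Eis" "x11' * x22' * x33' = 1"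
    using Bo_form[OF bB'] by blast
  have c1: "A$1$1 = x11 * d2" "A$2$1 = -(x11 * (d1 * c2))" "A$3$1 = x11 * (c1 * c2)"
    unfolding h(2) bx(1) Mm_def mat3_mult by (simp_all add: algebra_simps)
  have c1': "A$1$1 = x11' * d2'" "A$2$1 = -(x11' * (d1' * c2'))" "A$3$1 = x11' * (c1' * c2')"
    unfolding h'(2) bx'(1) Mm_def mat3_mult by (simp_all add: algebra_simps)
  have xz: "x11 * (x22 * x33) = 1" "x11' * (x22' * x33') = 1" using bx(5) bx'(5) by (simp_all add: mult.assoc)
  have eqs: "x11 * d2 = x11' * d2'" "x11 * (d1 * c2) = x11' * (d1' * c2')" "x11 * (c1 * c2) = x11' * (c1' * c2')"
    using c1 c1' by auto
  have U: "a1 = a1' \<and> b1 = b1' \<and> c1 = c1' \<and> d1 = d1' \<and> a2 = a2' \<and> b2 = b2' \<and> c2 = c2' \<and> d2 = d2'"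
    using core_unique[OF UR RR y1(2) y1'(2) y2(2) y2'(2) c2 c2' bx(2) _ xz(1) bx'(2) _ xz(2) eqs] bx bx' by auto
  have "d ** u ** h = d' ** u' ** h'"
  proof -
    let ?N = "Nm a1 b1 c1 d1 a2 b2 c2 d2"
    let ?M = "Mm a1 b1 c1 d1 a2 b2 c2 d2"
    have "?N ** A = (?N ** ?M) ** (d ** u ** h)" unfolding h(2) by (simp only: matrix_mul_assoc)
    then have 1: "?N ** A = d ** u ** h" unfolding MN(2)[OF det1 det2] by (simp add: matrix_mul_lid)
    let ?M' = "Mm a1' b1' c1' d1' a2' b2' c2' d2'"
    let ?N' = "Nm a1' b1' c1' d1' a2' b2' c2' d2'"
    have "?N' ** A = (?N' ** ?M') ** (d' ** u' ** h')" unfolding h'(2) by (simp only: matrix_mul_assoc)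
    then have 2: "?N' ** A = d' ** u' ** h'" unfolding MN(2)[OF det1' det2'] by (simp add: matrix_mul_lid)
    have "d ** u ** h = ?N ** A" using 1 by simp
    also have "\<dots> = d' ** u' ** h'" using 2 U by simp
    finally show ?thesis .
  qed
  then have "d = d' \<and> u = u'" using DUH_unique m h m' h' by blast
  then show ?thesis unfolding tt tt' y1 y2 y1' y2' using U by simp
qed

theorem theorem2p15:
  fixes R :: "complex set" and S :: "complex \<Rightarrow> complex set"
  assumes "unit_reps R" and "residue_reps R S"
  shows "Delta10 = (\<Union>t\<in>index_set R S. piece t) \<and> disjoint_family_on piece (index_set R S)"
proof
  show "Delta10 = (\<Union>t\<in>index_set R S. piece t)"
    using sub1[OF assms(1)] sub2[OF assms] by blast
  show "disjoint_family_on piece (index_set R S)"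
    unfolding disjoint_family_on_def using disj[OF assms] by blast
qed


end
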